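(* Consider the family of discrete-time load balancing systems described in the context under a throughput optimal Markovian policy, and assume $(\sigma_\Sigma^{(\epsilon)})^2\to\sigma_\Sigma^2$ as $\epsilon\downarrow0$. Then the policy is heavy-traffic delay optimal in steady state (i.e. $\limsup_{\epsilon\downarrow0}\epsilon\,\mathbb{E}[\sum_{n=1}^N\overline{Q}^{(\epsilon)}_n]\le\zeta/2$ with $\zeta=\sigma_\Sigma^2+\nu_\Sigma^2$) if and only if $$\lim_{\epsilon\downarrow0}\mathbb{E}\big[\|\overline{\mathbf{Q}}^{(\epsilon)}(t+1)\|_1\,\|\overline{\mathbf{U}}^{(\epsilon)}(t)\|_1\big]=0 .$$
   Context: Model: a discrete-time system with one dispatcher and $N$ servers; server $n$ has an infinite-buffer FIFO queue of length $Q_n(t)$ at the beginning of slot $t$. Arrivals $A_\Sigma(t)$: integer valued, i.i.d. over $t$, mean $\lambda_\Sigma$, variance $\sigma_\Sigma^2$, $\mathbb{P}(A_\Sigma(t)=0)>0$, $A_\Sigma(t)\le A_{\max}<\infty$. Service $S_n(t)$: integer valued, i.i.d. over $t$, independent across servers and of arrivals, $S_n(t)\le S_{\max}<\infty$, mean $\mu_n$, variance $\nu_n^2$; $\mu_\Sigma=\sum_n\mu_n$, $\nu^2_\Sigma=\sum_n\nu_n^2$. In each slot the arrivals are routed to one queue by a rule depending only on $\mathbf{Q}(t)$; $A_n(t)$ is the number routed to queue $n$. Dynamics: $Q_n(t+1)=Q_n(t)+A_n(t)-S_n(t)+U_n(t)$, $U_n(t)=\max\{S_n(t)-Q_n(t)-A_n(t),0\}$.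 Family indexed by $\epsilon>0$: arrivals $A_\Sigma^{(\epsilon)}(t)$ with mean $\mu_\Sigma-\epsilon$ and variance $(\sigma^{(\epsilon)}_\Sigma)^2$. Throughput optimal: for every $\epsilon>0$ the chain $\{\mathbf{Q}(t)\}$ is positive recurrent and all moments of the stationary $\|\overline{\mathbf{Q}}^{(\epsilon)}\|$ are finite. In the displayed expectation, $\overline{\mathbf{Q}}^{(\epsilon)}(t)$ is distributed according to the stationary distribution, $\overline{\mathbf{U}}^{(\epsilon)}(t)$ is the unused service in slot $t$, and $\overline{\mathbf{Q}}^{(\epsilon)}(t+1)$ is the resulting next state. $\|\mathbf{x}\|_1=\sum_n|x_n|$. *)

theory Defs
  imports "HOL-Probability.Probability"
begin

text \<open>One slot of the load-balancing system: arrival batch a ~ A, independent service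
  vector s ~ product of the S n, and (possibly randomised) routing i ~ r q depending
  only on the current queue vector q.  The result is the pair (U(t), Q(t+1)) where
  U(t) is the unused service and Q(t+1) the next state (nat subtraction truncates,
  so q+a-s in nat equals q+a-s+U).\<close>

definition lb_step ::
  "nat pmf \<Rightarrow> ('n::finite \<Rightarrow> nat pmf) \<Rightarrow> (('n \<Rightarrow> nat) \<Rightarrow> 'n pmf)
     \<Rightarrow> ('n \<Rightarrow> nat) \<Rightarrow> (('n \<Rightarrow> nat) \<times> ('n \<Rightarrow> nat)) pmf" where
  "lb_step A S r q =
     bind_pmf A (\<lambda>a. bind_pmf (Pi_pmf UNIV 0 S) (\<lambda>s. bind_pmf (r q) (\<lambda>i.
       (let qa = (\<lambda>n. q n + (if n = i then a else 0))
        in return_pmf ((\<lambda>n. s n - qa n), (\<lambda>n. qa n - s n))))))"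

definition lb_kernel ::
  "nat pmf \<Rightarrow> ('n::finite \<Rightarrow> nat pmf) \<Rightarrow> (('n \<Rightarrow> nat) \<Rightarrow> 'n pmf)
     \<Rightarrow> ('n \<Rightarrow> nat) \<Rightarrow> ('n \<Rightarrow> nat) pmf" where
  "lb_kernel A S r q = map_pmf snd (lb_step A S r q)"

definition stationary :: "('s \<Rightarrow> 's pmf) \<Rightarrow> 's pmf \<Rightarrow> bool" where
  "stationary K p \<longleftrightarrow> bind_pmf p K = p"

definition norm1 :: "('n::finite \<Rightarrow> nat) \<Rightarrow> real" where
  "norm1 x = real (\<Sum>n\<in>UNIV. x n)"

text \<open>Throughput optimality for the family A (indexed by eps in (0, muSum)):
  the chain has a unique stationary distribution (positive recurrence), and all
  moments of the l1 norm of the stationary queue vector are finite.\<close>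
definition throughput_optimal ::
  "(real \<Rightarrow> nat pmf) \<Rightarrow> ('n::finite \<Rightarrow> nat pmf) \<Rightarrow> (('n \<Rightarrow> nat) \<Rightarrow> 'n pmf) \<Rightarrow> real \<Rightarrow> bool" where
  "throughput_optimal A S r muSum \<longleftrightarrow>
     (\<forall>eps. 0 < eps \<and> eps < muSum \<longrightarrow>
        (\<exists>!p. stationary (lb_kernel (A eps) S r) p) \<and>
        (\<forall>p. stationary (lb_kernel (A eps) S r) p \<longrightarrow>
              (\<forall>k::nat. integrable (measure_pmf p) (\<lambda>q. norm1 q ^ k))))"

end

theory Submission
  imports Defs
begin

lemma bind_integral:
  fixes f :: "'b \<Rightarrow> real"
  assumes "integrable (measure_pmf (bind_pmf p N)) f"
    "\<And>x. x \<in> set_pmf (bind_pmf p N) \<Longrightarrow> f x \<ge> 0"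
    "\<And>q. q \<in> set_pmf p \<Longrightarrow> integrable (measure_pmf (N q)) f"
    "integrable (measure_pmf p) (\<lambda>q. measure_pmf.expectation (N q) f)"
  shows "measure_pmf.expectation (bind_pmf p N) f = measure_pmf.expectation p (\<lambda>q. measure_pmf.expectation (N q) f)"
proof -
  have nn: "0 \<le> measure_pmf.expectation (N q) f" if "q \<in> set_pmf p" for q
    using that assms(2) by (intro integral_nonneg_AE AE_pmfI) auto
  have "ennreal (measure_pmf.expectation (bind_pmf p N) f) = (\<integral>\<^sup>+x. ennreal (f x) \<partial>bind_pmf p N)"
    using assms by (intro nn_integral_eq_integral[symmetric]) (auto intro!: AE_pmfI)
  also have "\<dots> = (\<integral>\<^sup>+q. \<integral>\<^sup>+y. ennreal (f y) \<partial>N q \<partial>p)" by simp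
  also have "\<dots> = (\<integral>\<^sup>+q. ennreal (measure_pmf.expectation (N q) f) \<partial>p)"
    using assms by (intro nn_integral_cong_AE AE_pmfI nn_integral_eq_integral) (auto intro!: AE_pmfI)
  also have "\<dots> = ennreal (measure_pmf.expectation p (\<lambda>q. measure_pmf.expectation (N q) f))"
    using assms nn by (intro nn_integral_eq_integral) (auto intro!: AE_pmfI)
  finally show ?thesis
    using nn assms(2) by (subst (asm) ennreal_inj) (auto intro!: integral_nonneg_AE AE_pmfI)
qed

lemma pair_integral:
  fixes f :: "'a \<times> 'b \<Rightarrow> real"
  assumes "finite (set_pmf A)" "finite (set_pmf B)" "\<And>x. f x \<ge> 0"
  shows "measure_pmf.expectation (pair_pmf A B) f = measure_pmf.expectation A (\<lambda>a. measure_pmf.expectation B (\<lambda>b. f (a, b)))"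
proof -
  have e: "pair_pmf A B = bind_pmf A (\<lambda>a. map_pmf (Pair a) B)"
    unfolding pair_pmf_def by (simp add: map_pmf_def)
  show ?thesis unfolding e
    by (subst bind_integral) (auto intro!: integrable_measure_pmf_finite simp: assms e[symmetric])
qed

lemma bounded_integrable:
  fixes f :: "'a \<Rightarrow> real"
  assumes "\<And>x. x \<in> set_pmf M \<Longrightarrow> \<bar>f x\<bar> \<le> B"
  shows "integrable (measure_pmf M) f"
  by (rule measure_pmf.integrable_const_bound[where B=B]) (auto intro!: AE_pmfI assms)


lemma norm1_diff:
  fixes q s :: "'n::finite \<Rightarrow> nat"
  shows "norm1 (\<lambda>n. q n + (if n = i then a else 0) - s n) - norm1 (\<lambda>n. s n - (q n + (if n = i then a else 0)))
         = norm1 q + real a - norm1 s"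
proof -
  have "norm1 (\<lambda>n. q n + (if n = i then a else 0) - s n) - norm1 (\<lambda>n. s n - (q n + (if n = i then a else 0)))
      = (\<Sum>n\<in>UNIV. real (q n) + (if n = i then real a else 0) - real (s n))"
    unfolding norm1_def of_nat_sum sum_subtractf[symmetric]
    by (intro sum.cong) auto
  also have "\<dots> = norm1 q + real a - norm1 s"
    unfolding norm1_def of_nat_sum sum_subtractf sum.distrib by simp
  finally show ?thesis .
qed

context
  fixes Aa :: "nat pmf" and S :: "'n::finite \<Rightarrow> nat pmf" and r :: "('n \<Rightarrow> nat) \<Rightarrow> 'n pmf"
    and Amax Smax :: nat
  assumes Sb: "\<forall>n. \<forall>s \<in> set_pmf (S n). s \<le> Smax"
    and Ab: "\<forall>a \<in> set_pmf Aa. a \<le> Amax"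
begin

lemma finA: "finite (set_pmf Aa)"
  by (rule finite_subset[of _ "{..Amax}"]) (use Ab in auto)

lemma finS: "finite (set_pmf (S n))"
  by (rule finite_subset[of _ "{..Smax}"]) (use Sb in auto)

lemma finPi: "finite (set_pmf (Pi_pmf UNIV 0 S))"
  by (simp add: set_Pi_pmf finS finite_PiE_dflt)

lemma Pi_bound: "s \<in> set_pmf (Pi_pmf UNIV 0 S) \<Longrightarrow> s n \<le> Smax"
  using Sb by (auto simp: set_Pi_pmf PiE_dflt_def)

lemma finP: "finite (set_pmf (pair_pmf Aa (Pi_pmf UNIV 0 S)))"
  using finA finPi by simp

lemma set_step: "set_pmf (lb_step Aa S r q) \<subseteq>
   (\<lambda>(a,s,i). ((\<lambda>n. s n - (q n + (if n = i then a else 0))), (\<lambda>n. q n + (if n = i then a else 0) - s n)))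
     ` (set_pmf Aa \<times> set_pmf (Pi_pmf UNIV 0 S) \<times> UNIV)"
  unfolding lb_step_def Let_def by (auto simp: image_iff; blast)

lemma fin_step: "finite (set_pmf (lb_step Aa S r q))"
  by (rule finite_subset[OF set_step]) (auto intro!: finite_imageI finite_cartesian_product finA finPi)

lemma U_bound: "x \<in> set_pmf (lb_step Aa S r q) \<Longrightarrow> fst x n \<le> Smax"
proof -
  assume "x \<in> set_pmf (lb_step Aa S r q)"
  then obtain a s i where "s \<in> set_pmf (Pi_pmf UNIV 0 S)"
    "x = ((\<lambda>n. s n - (q n + (if n = i then a else 0))), (\<lambda>n. q n + (if n = i then a else 0) - s n))"
    using set_step[of q] by fastforce
  then show ?thesis using Pi_bound[of s n] by auto
qed

lemma norm1_U_bound: "x \<in> set_pmf (lb_step Aa S r q) \<Longrightarrow> norm1 (fst x) \<le> real (CARD('n) * Smax)"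
proof -
  assume x: "x \<in> set_pmf (lb_step Aa S r q)"
  have "(\<Sum>n\<in>UNIV. fst x n) \<le> (\<Sum>n\<in>(UNIV::'n set). Smax)"
    by (intro sum_mono U_bound[OF x])
  then show ?thesis unfolding norm1_def by (simp only: of_nat_le_iff) simp
qed

lemma step_map:
  "map_pmf (\<lambda>(u, q'). norm1 q' - norm1 u) (lb_step Aa S r q) =
   map_pmf (\<lambda>(a, s). norm1 q + real a - norm1 s) (pair_pmf Aa (Pi_pmf UNIV 0 S))"
  unfolding lb_step_def pair_pmf_def Let_def
  by (simp add: map_bind_pmf norm1_diff)

lemma intPi: fixes f :: "_ \<Rightarrow> real" shows "integrable (measure_pmf (Pi_pmf UNIV 0 S)) f"
  by (rule integrable_measure_pmf_finite[OF finPi])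

lemma intS: fixes f :: "_ \<Rightarrow> real" shows "integrable (measure_pmf (S n)) f"
  by (rule integrable_measure_pmf_finite[OF finS])

lemma intA: fixes f :: "_ \<Rightarrow> real" shows "integrable (measure_pmf Aa) f"
  by (rule integrable_measure_pmf_finite[OF finA])

lemma EPi_comp: fixes f :: "nat \<Rightarrow> real" shows "measure_pmf.expectation (Pi_pmf UNIV 0 S) (\<lambda>s. f (s n)) = measure_pmf.expectation (S n) f"
proof -
  have "measure_pmf.expectation (Pi_pmf UNIV 0 S) (\<lambda>s. f (s n)) =
        measure_pmf.expectation (map_pmf (\<lambda>s. s n) (Pi_pmf UNIV 0 S)) f" by simp
  also have "map_pmf (\<lambda>s. s n) (Pi_pmf UNIV 0 S) = S n" by (simp add: Pi_pmf_component)
  finally show ?thesis .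
qed

lemma EPi_prod: assumes "n \<noteq> m"
  shows "measure_pmf.expectation (Pi_pmf UNIV 0 S) (\<lambda>s. real (s n) * real (s m)) =
         measure_pmf.expectation (S n) real * measure_pmf.expectation (S m) real"
proof -
  define f where "f = (\<lambda>x v. if x = n \<or> x = m then real v else 1)"
  have eq: "(\<Prod>x\<in>UNIV. f x (s x)) = real (s n) * real (s m)" for s :: "'n \<Rightarrow> nat"
  proof -
    have "(\<Prod>x\<in>UNIV. f x (s x)) = (\<Prod>x\<in>{n,m}. real (s x))"
      unfolding f_def by (subst prod.If_cases) (auto intro!: prod.cong)
    then show ?thesis using assms by simp
  qed
  have "measure_pmf.expectation (Pi_pmf UNIV 0 S) (\<lambda>s. \<Prod>x\<in>UNIV. f x (s x)) =
        (\<Prod>x\<in>UNIV. measure_pmf.expectation (S x) (f x))"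
    by (rule expectation_prod_Pi_pmf) (auto simp: f_def intS)
  also have "\<dots> = (\<Prod>x\<in>UNIV. if x = n \<or> x = m then measure_pmf.expectation (S x) real else 1)"
    by (intro prod.cong) (auto simp: f_def)
  also have "\<dots> = (\<Prod>x\<in>{n,m}. measure_pmf.expectation (S x) real)"
    by (subst prod.If_cases) (auto intro!: prod.cong)
  finally show ?thesis using assms by (simp add: eq)
qed

lemma EPi1: "measure_pmf.expectation (Pi_pmf UNIV 0 S) norm1 = (\<Sum>n\<in>UNIV. measure_pmf.expectation (S n) real)"
  unfolding norm1_def of_nat_sum
  by (simp add: intPi EPi_comp)

lemma EPi2: "measure_pmf.expectation (Pi_pmf UNIV 0 S) (\<lambda>s. (norm1 s)^2) =
   (\<Sum>n\<in>UNIV. measure_pmf.expectation (S n) (\<lambda>x. (real x)^2) - (measure_pmf.expectation (S n) real)^2)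
   + (\<Sum>n\<in>UNIV. measure_pmf.expectation (S n) real)^2"
proof -
  let ?E = "\<lambda>n. measure_pmf.expectation (S n) real"
  have sq: "(norm1 s)^2 = (\<Sum>n\<in>UNIV. \<Sum>m\<in>UNIV. real (s n) * real (s m))" for s :: "'n \<Rightarrow> nat"
    unfolding norm1_def of_nat_sum power2_eq_square sum_product ..
  have "measure_pmf.expectation (Pi_pmf UNIV 0 S) (\<lambda>s. (norm1 s)^2) =
     (\<Sum>n\<in>UNIV. \<Sum>m\<in>UNIV. measure_pmf.expectation (Pi_pmf UNIV 0 S) (\<lambda>s. real (s n) * real (s m)))"
    unfolding sq by (simp add: intPi)
  also have "\<dots> = (\<Sum>n\<in>UNIV. \<Sum>m\<in>UNIV. if n = m then measure_pmf.expectation (S n) (\<lambda>x. (real x)^2) else ?E n * ?E m)"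
    by (intro sum.cong refl) (auto simp: EPi_prod EPi_comp[of "\<lambda>x. real x * real x", simplified] power2_eq_square)
  also have "\<dots> = (\<Sum>n\<in>UNIV. (measure_pmf.expectation (S n) (\<lambda>x. (real x)^2) - (?E n)^2) + (\<Sum>m\<in>UNIV. ?E n * ?E m))"
  proof (intro sum.cong refl)
    fix n
    have "(\<Sum>m\<in>UNIV. if n = m then measure_pmf.expectation (S n) (\<lambda>x. (real x)^2) else ?E n * ?E m)
       = (\<Sum>m\<in>UNIV. (if n = m then measure_pmf.expectation (S n) (\<lambda>x. (real x)^2) - (?E n)^2 else 0) + ?E n * ?E m)"
      by (intro sum.cong) (auto simp: power2_eq_square)
    then show "(\<Sum>m\<in>UNIV. if n = m then measure_pmf.expectation (S n) (\<lambda>x. (real x)^2) else ?E n * ?E m)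
       = (measure_pmf.expectation (S n) (\<lambda>x. (real x)^2) - (?E n)^2) + (\<Sum>m\<in>UNIV. ?E n * ?E m)"
      by (simp add: sum.distrib)
  qed
  also have "\<dots> = (\<Sum>n\<in>UNIV. measure_pmf.expectation (S n) (\<lambda>x. (real x)^2) - (?E n)^2) + (\<Sum>n\<in>UNIV. ?E n)^2"
    by (simp add: sum.distrib power2_eq_square sum_product)
  finally show ?thesis .
qed


lemma intP: fixes f :: "_ \<Rightarrow> real" shows "integrable (measure_pmf (pair_pmf Aa (Pi_pmf UNIV 0 S))) f"
  by (rule integrable_measure_pmf_finite[OF finP])

lemma EPi_sq: "measure_pmf.expectation (Pi_pmf UNIV 0 S) (\<lambda>s. (x - norm1 s)^2) =
   x^2 - 2*x*measure_pmf.expectation (Pi_pmf UNIV 0 S) norm1 + measure_pmf.expectation (Pi_pmf UNIV 0 S) (\<lambda>s. (norm1 s)^2)"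
  by (simp add: power2_diff intPi)

lemma EA_sq: "measure_pmf.expectation Aa (\<lambda>a. (c + real a)^2 - 2*(c + real a)*M1 + M2) =
   c^2 + 2*c*(measure_pmf.expectation Aa real - M1)
   + (measure_pmf.expectation Aa (\<lambda>a. (real a)^2) - 2*measure_pmf.expectation Aa real*M1 + M2)"
  by (simp add: power2_sum intA algebra_simps)

lemma EP_quad: "measure_pmf.expectation (pair_pmf Aa (Pi_pmf UNIV 0 S)) (\<lambda>(a,s). (c + real a - norm1 s)^2) =
   c^2 + 2*c*(measure_pmf.expectation Aa real - measure_pmf.expectation (Pi_pmf UNIV 0 S) norm1)
   + (measure_pmf.expectation Aa (\<lambda>a. (real a)^2) - 2*measure_pmf.expectation Aa real*measure_pmf.expectation (Pi_pmf UNIV 0 S) norm1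
      + measure_pmf.expectation (Pi_pmf UNIV 0 S) (\<lambda>s. (norm1 s)^2))" (is "_ = ?R")
proof -
  have "measure_pmf.expectation (pair_pmf Aa (Pi_pmf UNIV 0 S)) (\<lambda>(a,s). (c + real a - norm1 s)^2)
      = measure_pmf.expectation Aa (\<lambda>a. measure_pmf.expectation (Pi_pmf UNIV 0 S) (\<lambda>s. (c + real a - norm1 s)^2))"
    by (subst pair_integral) (auto simp: finA finPi)
  also have "\<dots> = measure_pmf.expectation Aa (\<lambda>a. (c + real a)^2 - 2*(c + real a)*measure_pmf.expectation (Pi_pmf UNIV 0 S) norm1
      + measure_pmf.expectation (Pi_pmf UNIV 0 S) (\<lambda>s. (norm1 s)^2))"
    using EPi_sq by simp
  also have "\<dots> = ?R" by (rule EA_sq)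
  finally show ?thesis .
qed

lemma EP_lin: "measure_pmf.expectation (pair_pmf Aa (Pi_pmf UNIV 0 S)) (\<lambda>(a,s). c + real a - norm1 s + K) =
   c + measure_pmf.expectation Aa real - measure_pmf.expectation (Pi_pmf UNIV 0 S) norm1 + K" (is "_ = ?R")
proof -
  have "measure_pmf.expectation (pair_pmf Aa (Pi_pmf UNIV 0 S)) (\<lambda>(a,s). c + real a - norm1 s + K) =
    measure_pmf.expectation (pair_pmf Aa (Pi_pmf UNIV 0 S)) (\<lambda>x. c + real (fst x) - norm1 (snd x) + K)"
    by (simp add: case_prod_unfold)
  also have "\<dots> = c + measure_pmf.expectation (pair_pmf Aa (Pi_pmf UNIV 0 S)) (\<lambda>x. real (fst x))
       - measure_pmf.expectation (pair_pmf Aa (Pi_pmf UNIV 0 S)) (\<lambda>x. norm1 (snd x)) + K"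
    by (simp add: intP)
  also have "\<dots> = ?R" by simp
  finally show ?thesis .
qed


lemma step_quad: "measure_pmf.expectation (lb_step Aa S r q) (\<lambda>x. (norm1 (snd x) - norm1 (fst x))^2) =
   measure_pmf.expectation (pair_pmf Aa (Pi_pmf UNIV 0 S)) (\<lambda>(a,s). (norm1 q + real a - norm1 s)^2)"
proof -
  have "measure_pmf.expectation (lb_step Aa S r q) (\<lambda>x. (norm1 (snd x) - norm1 (fst x))^2) =
     measure_pmf.expectation (map_pmf (\<lambda>(u, q'). norm1 q' - norm1 u) (lb_step Aa S r q)) (\<lambda>z. z^2)"
    by (simp add: case_prod_unfold)
  also have "\<dots> = measure_pmf.expectation (map_pmf (\<lambda>(a, s). norm1 q + real a - norm1 s) (pair_pmf Aa (Pi_pmf UNIV 0 S))) (\<lambda>z. z^2)"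
    by (simp only: step_map)
  also have "\<dots> = measure_pmf.expectation (pair_pmf Aa (Pi_pmf UNIV 0 S)) (\<lambda>(a,s). (norm1 q + real a - norm1 s)^2)"
    by (simp add: case_prod_unfold)
  finally show ?thesis .
qed

lemma step_lin: "measure_pmf.expectation (lb_step Aa S r q) (\<lambda>x. norm1 (snd x) - norm1 (fst x) + K) =
   measure_pmf.expectation (pair_pmf Aa (Pi_pmf UNIV 0 S)) (\<lambda>(a,s). norm1 q + real a - norm1 s + K)"
proof -
  have "measure_pmf.expectation (lb_step Aa S r q) (\<lambda>x. norm1 (snd x) - norm1 (fst x) + K) =
     measure_pmf.expectation (map_pmf (\<lambda>(u, q'). norm1 q' - norm1 u) (lb_step Aa S r q)) (\<lambda>z. z + K)"
    by (simp add: case_prod_unfold)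
  also have "\<dots> = measure_pmf.expectation (map_pmf (\<lambda>(a, s). norm1 q + real a - norm1 s) (pair_pmf Aa (Pi_pmf UNIV 0 S))) (\<lambda>z. z + K)"
    by (simp only: step_map)
  also have "\<dots> = measure_pmf.expectation (pair_pmf Aa (Pi_pmf UNIV 0 S)) (\<lambda>(a,s). norm1 q + real a - norm1 s + K)"
    by (simp add: case_prod_unfold)
  finally show ?thesis .
qed

lemma map_snd_J: "stationary (lb_kernel Aa S r) p \<Longrightarrow> map_pmf snd (bind_pmf p (lb_step Aa S r)) = p"
proof -
  have e: "lb_kernel Aa S r = (\<lambda>q. map_pmf snd (lb_step Aa S r q))" by (rule ext) (simp add: lb_kernel_def)
  assume "stationary (lb_kernel Aa S r) p"
  then show ?thesis by (simp add: map_bind_pmf stationary_def e)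
qed

lemma J_U_bound: "x \<in> set_pmf (bind_pmf p (lb_step Aa S r)) \<Longrightarrow> norm1 (fst x) \<le> real (CARD('n) * Smax)"
proof -
  assume "x \<in> set_pmf (bind_pmf p (lb_step Aa S r))"
  then obtain q where "x \<in> set_pmf (lb_step Aa S r q)" by auto
  then show ?thesis by (rule norm1_U_bound)
qed

lemma norm1_nonneg: "0 \<le> norm1 x"
  by (simp add: norm1_def sum_nonneg)


lemma core:
  assumes stat: "stationary (lb_kernel Aa S r) p"
    and i1: "integrable (measure_pmf p) norm1" and i2: "integrable (measure_pmf p) (\<lambda>q. (norm1 q)^2)"
  defines "J \<equiv> bind_pmf p (lb_step Aa S r)"
    and "M1 \<equiv> measure_pmf.expectation (Pi_pmf UNIV 0 S) norm1"
    and "Ea \<equiv> measure_pmf.expectation Aa real"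
    and "v2 \<equiv> measure_pmf.expectation Aa (\<lambda>a. (real a)^2) - 2*measure_pmf.expectation Aa real*measure_pmf.expectation (Pi_pmf UNIV 0 S) norm1
      + measure_pmf.expectation (Pi_pmf UNIV 0 S) (\<lambda>s. (norm1 s)^2)"
    and "K \<equiv> real (CARD('n) * Smax)"
  shows "measure_pmf.expectation J (\<lambda>x. norm1 (fst x)) = M1 - Ea"
    and "2*(M1 - Ea) * measure_pmf.expectation p norm1 =
         v2 - measure_pmf.expectation J (\<lambda>x. (norm1 (fst x))^2) + 2 * measure_pmf.expectation J (\<lambda>x. norm1 (snd x) * norm1 (fst x))"
    and "0 \<le> measure_pmf.expectation J (\<lambda>x. (norm1 (fst x))^2)"
    and "measure_pmf.expectation J (\<lambda>x. (norm1 (fst x))^2) \<le> K * measure_pmf.expectation J (\<lambda>x. norm1 (fst x))"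
    and "0 \<le> measure_pmf.expectation J (\<lambda>x. norm1 (snd x) * norm1 (fst x))"
proof -
  have mJ: "map_pmf snd J = p" unfolding J_def by (rule map_snd_J[OF stat])
  have Ub: "norm1 (fst x) \<le> K" if "x \<in> set_pmf J" for x
    using J_U_bound that unfolding J_def K_def by blast
  have K0: "0 \<le> K" unfolding K_def by simp
  have EY: "measure_pmf.expectation J (\<lambda>x. f (norm1 (snd x))) = measure_pmf.expectation p (\<lambda>q. f (norm1 q))" for f :: "real \<Rightarrow> real"
  proof -
    have "measure_pmf.expectation J (\<lambda>x. f (norm1 (snd x))) = measure_pmf.expectation (map_pmf snd J) (\<lambda>q. f (norm1 q))"
      by simp
    then show ?thesis by (simp only: mJ)
  qed
  have intY: "integrable (measure_pmf J) (\<lambda>x. norm1 (snd x))"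
    using i1 by (subst integrable_map_pmf_eq[symmetric, where f=snd and g=norm1]) (simp add: mJ)
  have intY2: "integrable (measure_pmf J) (\<lambda>x. (norm1 (snd x))^2)"
    using i2 by (subst integrable_map_pmf_eq[symmetric, where f=snd and g="\<lambda>q. (norm1 q)^2"]) (simp add: mJ)
  have intU: "integrable (measure_pmf J) (\<lambda>x. norm1 (fst x))"
  proof (rule bounded_integrable[where B=K])
    fix x assume "x \<in> set_pmf J"
    then show "\<bar>norm1 (fst x)\<bar> \<le> K" using Ub[of x] norm1_nonneg[of "fst x"] by linarith
  qed
  have intU2: "integrable (measure_pmf J) (\<lambda>x. (norm1 (fst x))^2)"
    by (rule bounded_integrable[where B="K^2"]) (use Ub norm1_nonneg in \<open>auto intro!: power_mono\<close>)
  have intYU: "integrable (measure_pmf J) (\<lambda>x. norm1 (snd x) * norm1 (fst x))"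
  proof (rule Bochner_Integration.integrable_bound[where f="\<lambda>x. K * norm1 (snd x)"])
    show "integrable (measure_pmf J) (\<lambda>x. K * norm1 (snd x))" using intY by simp
    show "AE x in measure_pmf J. norm (norm1 (snd x) * norm1 (fst x)) \<le> norm (K * norm1 (snd x))"
    proof (intro AE_pmfI)
      fix x assume "x \<in> set_pmf J"
      then have "norm1 (fst x) \<le> K" "0 \<le> norm1 (fst x)" "0 \<le> norm1 (snd x)" using Ub norm1_nonneg by auto
      then show "norm (norm1 (snd x) * norm1 (fst x)) \<le> norm (K * norm1 (snd x))"
        by (simp add: abs_of_nonneg) (metis mult.commute mult_right_mono)
    qed
  qed simp
  have fin: "\<And>q. finite (set_pmf (lb_step Aa S r q))" by (rule fin_step)
  have inner_q: "measure_pmf.expectation (lb_step Aa S r q) (\<lambda>x. (norm1 (snd x) - norm1 (fst x))^2) =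
        (norm1 q)^2 + 2*norm1 q*(Ea - M1) + v2" for q
    unfolding step_quad EP_quad Ea_def M1_def v2_def by simp
  have quad: "measure_pmf.expectation J (\<lambda>x. (norm1 (snd x) - norm1 (fst x))^2) =
      measure_pmf.expectation p (\<lambda>q. (norm1 q)^2 + 2*norm1 q*(Ea - M1) + v2)"
  proof -
    have "measure_pmf.expectation J (\<lambda>x. (norm1 (snd x) - norm1 (fst x))^2) =
      measure_pmf.expectation p (\<lambda>q. measure_pmf.expectation (lb_step Aa S r q) (\<lambda>x. (norm1 (snd x) - norm1 (fst x))^2))"
      unfolding J_def
    proof (rule bind_integral)
      have "integrable (measure_pmf J) (\<lambda>x. (norm1 (snd x))^2 - 2 * (norm1 (snd x) * norm1 (fst x)) + (norm1 (fst x))^2)"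
        using intY2 intYU intU2 by auto
      then show "integrable (measure_pmf (p \<bind> lb_step Aa S r)) (\<lambda>x. (norm1 (snd x) - norm1 (fst x))\<^sup>2)"
        unfolding J_def by (simp add: power2_diff algebra_simps)
      show "integrable (measure_pmf p) (\<lambda>q. measure_pmf.expectation (lb_step Aa S r q) (\<lambda>x. (norm1 (snd x) - norm1 (fst x))\<^sup>2))"
        unfolding inner_q using i1 i2 by auto
    qed (auto intro!: integrable_measure_pmf_finite fin)
    then show ?thesis unfolding inner_q .
  qed
  have inner_l: "measure_pmf.expectation (lb_step Aa S r q) (\<lambda>x. norm1 (snd x) - norm1 (fst x) + K) =
        norm1 q + Ea - M1 + K" for q
    unfolding step_lin EP_lin Ea_def M1_def by simp
  have lin: "measure_pmf.expectation J (\<lambda>x. norm1 (snd x) - norm1 (fst x) + K) =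
      measure_pmf.expectation p (\<lambda>q. norm1 q + Ea - M1 + K)"
  proof -
    have "measure_pmf.expectation J (\<lambda>x. norm1 (snd x) - norm1 (fst x) + K) =
      measure_pmf.expectation p (\<lambda>q. measure_pmf.expectation (lb_step Aa S r q) (\<lambda>x. norm1 (snd x) - norm1 (fst x) + K))"
      unfolding J_def
    proof (rule bind_integral)
      show "integrable (measure_pmf (p \<bind> lb_step Aa S r)) (\<lambda>x. norm1 (snd x) - norm1 (fst x) + K)"
        using intY intU unfolding J_def by auto
      show "integrable (measure_pmf p) (\<lambda>q. measure_pmf.expectation (lb_step Aa S r q) (\<lambda>x. norm1 (snd x) - norm1 (fst x) + K))"
        unfolding inner_l using i1 by auto
      show "0 \<le> norm1 (snd x) - norm1 (fst x) + K" if "x \<in> set_pmf (p \<bind> lb_step Aa S r)" for x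
        using Ub[of x] norm1_nonneg[of "snd x"] that unfolding J_def by auto
    qed (auto intro!: integrable_measure_pmf_finite fin)
    then show ?thesis unfolding inner_l .
  qed
  have lin2: "measure_pmf.expectation J (\<lambda>x. norm1 (snd x) - norm1 (fst x) + K) =
     measure_pmf.expectation J (\<lambda>x. norm1 (snd x)) - measure_pmf.expectation J (\<lambda>x. norm1 (fst x)) + K"
    using intY intU by simp
  have lin3: "measure_pmf.expectation p (\<lambda>q. norm1 q + Ea - M1 + K) = measure_pmf.expectation p norm1 + Ea - M1 + K"
    using i1 by simp
  have EY1: "measure_pmf.expectation J (\<lambda>x. norm1 (snd x)) = measure_pmf.expectation p norm1"
    using EY[of "\<lambda>z. z"] by simp
  show EU: "measure_pmf.expectation J (\<lambda>x. norm1 (fst x)) = M1 - Ea"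
    using lin lin2 lin3 EY1 by simp
  have quad2: "measure_pmf.expectation J (\<lambda>x. (norm1 (snd x) - norm1 (fst x))^2) =
     measure_pmf.expectation J (\<lambda>x. (norm1 (snd x))^2) - 2 * measure_pmf.expectation J (\<lambda>x. norm1 (snd x) * norm1 (fst x))
     + measure_pmf.expectation J (\<lambda>x. (norm1 (fst x))^2)"
  proof -
    have e: "(\<lambda>x. (norm1 (snd x) - norm1 (fst x))^2) = (\<lambda>x. ((norm1 (snd x))^2 - 2 * (norm1 (snd x) * norm1 (fst x))) + (norm1 (fst x))^2)"
      by (rule ext) (simp add: power2_diff)
    have i: "integrable (measure_pmf J) (\<lambda>x. 2 * (norm1 (snd x) * norm1 (fst x)))" using intYU by simp
    show ?thesis unfolding e
      by (simp only: Bochner_Integration.integral_add[OF Bochner_Integration.integrable_diff[OF intY2 i] intU2] Bochner_Integration.integral_diff[OF intY2 i] integral_mult_right_zero)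
  qed
  have quad3: "measure_pmf.expectation p (\<lambda>q. (norm1 q)^2 + 2*norm1 q*(Ea - M1) + v2) =
     measure_pmf.expectation p (\<lambda>q. (norm1 q)^2) + 2*(Ea - M1) * measure_pmf.expectation p norm1 + v2"
  proof -
    have "measure_pmf.expectation p (\<lambda>q. (norm1 q)^2 + 2*norm1 q*(Ea - M1) + v2) =
       measure_pmf.expectation p (\<lambda>q. (norm1 q)^2 + (2*(Ea - M1)) * norm1 q + v2)"
      by (simp add: algebra_simps)
    also have "\<dots> = measure_pmf.expectation p (\<lambda>q. (norm1 q)^2) + 2*(Ea - M1) * measure_pmf.expectation p norm1 + v2"
      using i1 i2 by simp
    finally show ?thesis .
  qed
  have EY2: "measure_pmf.expectation J (\<lambda>x. (norm1 (snd x))^2) = measure_pmf.expectation p (\<lambda>q. (norm1 q)^2)"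
    using EY[of "\<lambda>z. z^2"] by simp
  show "2*(M1 - Ea) * measure_pmf.expectation p norm1 =
         v2 - measure_pmf.expectation J (\<lambda>x. (norm1 (fst x))^2) + 2 * measure_pmf.expectation J (\<lambda>x. norm1 (snd x) * norm1 (fst x))"
    using quad quad2 quad3 EY2 by (simp add: algebra_simps)
  show "0 \<le> measure_pmf.expectation J (\<lambda>x. (norm1 (fst x))^2)"
    by (intro integral_nonneg_AE AE_pmfI) simp
  show "0 \<le> measure_pmf.expectation J (\<lambda>x. norm1 (snd x) * norm1 (fst x))"
    by (intro integral_nonneg_AE AE_pmfI) (simp add: norm1_nonneg)
  have "measure_pmf.expectation J (\<lambda>x. (norm1 (fst x))^2) \<le> measure_pmf.expectation J (\<lambda>x. K * norm1 (fst x))"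
  proof (intro integral_mono_AE intU2 AE_pmfI)
    show "integrable (measure_pmf J) (\<lambda>x. K * norm1 (fst x))" using intU by simp
    show "(norm1 (fst x))^2 \<le> K * norm1 (fst x)" if "x \<in> set_pmf J" for x
      using Ub[OF that] norm1_nonneg[of "fst x"] by (simp add: power2_eq_square mult_right_mono)
  qed
  then show "measure_pmf.expectation J (\<lambda>x. (norm1 (fst x))^2) \<le> K * measure_pmf.expectation J (\<lambda>x. norm1 (fst x))"
    by simp
qed

end

lemma eps_identity:
  fixes Aa :: "nat pmf" and S :: "'n::finite \<Rightarrow> nat pmf" and r :: "('n \<Rightarrow> nat) \<Rightarrow> 'n pmf"
    and \<mu> \<nu> :: "'n \<Rightarrow> real" and p :: "('n \<Rightarrow> nat) pmf"
  assumes Sb: "\<forall>n. \<forall>s \<in> set_pmf (S n). s \<le> Smax"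
    and Smean: "\<forall>n. \<mu> n = measure_pmf.expectation (S n) real"
    and Svar: "\<forall>n. \<nu> n ^ 2 = measure_pmf.variance (S n) real"
    and Ab: "\<forall>a \<in> set_pmf Aa. a \<le> Amax"
    and Amean: "measure_pmf.expectation Aa real = (\<Sum>n\<in>UNIV. \<mu> n) - eps"
    and stat: "stationary (lb_kernel Aa S r) p"
    and ints: "\<forall>k::nat. integrable (measure_pmf p) (\<lambda>q. norm1 q ^ k)"
  defines "J \<equiv> bind_pmf p (lb_step Aa S r)"
  shows "eps * measure_pmf.expectation p (\<lambda>q. real (\<Sum>n\<in>UNIV. q n)) =
          (measure_pmf.variance Aa real + (\<Sum>n\<in>UNIV. \<nu> n ^ 2) + eps^2 - measure_pmf.expectation J (\<lambda>x. (norm1 (fst x))^2)) / 2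
          + measure_pmf.expectation J (\<lambda>(u, q'). norm1 q' * norm1 u)"
    and "0 \<le> measure_pmf.expectation J (\<lambda>x. (norm1 (fst x))^2)"
    and "measure_pmf.expectation J (\<lambda>x. (norm1 (fst x))^2) \<le> real (CARD('n) * Smax) * eps"
    and "0 \<le> measure_pmf.expectation J (\<lambda>(u, q'). norm1 q' * norm1 u)"
proof -
  have i1: "integrable (measure_pmf p) norm1" using ints[rule_format, of 1] by simp
  have i2: "integrable (measure_pmf p) (\<lambda>q. (norm1 q)^2)" using ints[rule_format, of 2] by simp
  note C = core[OF Sb Ab stat i1 i2]
  have M1: "measure_pmf.expectation (Pi_pmf UNIV 0 S) norm1 = (\<Sum>n\<in>UNIV. \<mu> n)"
    using EPi1[OF Sb Ab] Smean by simp
  have M2: "measure_pmf.expectation (Pi_pmf UNIV 0 S) (\<lambda>s. (norm1 s)^2) = (\<Sum>n\<in>UNIV. \<nu> n ^ 2) + (\<Sum>n\<in>UNIV. \<mu> n)^2"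
  proof -
    have "\<nu> n ^ 2 = measure_pmf.expectation (S n) (\<lambda>x. (real x)^2) - (measure_pmf.expectation (S n) real)^2" for n
      using Svar measure_pmf.variance_eq[of "S n" real] intS[OF Sb Ab] by simp
    then show ?thesis using EPi2[OF Sb Ab] Smean by simp
  qed
  have VA: "measure_pmf.variance Aa real = measure_pmf.expectation Aa (\<lambda>x. (real x)^2) - (measure_pmf.expectation Aa real)^2"
    using measure_pmf.variance_eq[of Aa real] intA[OF Sb Ab] by simp
  have nf: "(\<lambda>q. real (\<Sum>n\<in>UNIV. q n)) = norm1" by (rule ext) (simp add: norm1_def)
  have gf: "(\<lambda>(u, q'). norm1 q' * norm1 u) = (\<lambda>x. norm1 (snd x) * norm1 (fst x))" by (rule ext) (simp add: case_prod_unfold)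
  have e: "(\<Sum>n\<in>UNIV. \<mu> n) - measure_pmf.expectation Aa real = eps" using Amean by simp
  show "eps * measure_pmf.expectation p (\<lambda>q. real (\<Sum>n\<in>UNIV. q n)) =
          (measure_pmf.variance Aa real + (\<Sum>n\<in>UNIV. \<nu> n ^ 2) + eps^2 - measure_pmf.expectation J (\<lambda>x. (norm1 (fst x))^2)) / 2
          + measure_pmf.expectation J (\<lambda>(u, q'). norm1 q' * norm1 u)"
    using C(2) unfolding nf gf J_def M1 M2 VA e[symmetric]
    apply (simp add: algebra_simps power2_eq_square)
    by (simp add: field_simps)
  show "0 \<le> measure_pmf.expectation J (\<lambda>x. (norm1 (fst x))^2)" using C(3) unfolding J_def .
  show "measure_pmf.expectation J (\<lambda>x. (norm1 (fst x))^2) \<le> real (CARD('n) * Smax) * eps"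
    using C(4) C(1) unfolding J_def M1 e by simp
  show "0 \<le> measure_pmf.expectation J (\<lambda>(u, q'). norm1 q' * norm1 u)" using C(5) unfolding J_def gf .
qed


theorem lemma3:
  fixes A :: "real \<Rightarrow> nat pmf"
    and S :: "'n::finite \<Rightarrow> nat pmf"
    and r :: "('n \<Rightarrow> nat) \<Rightarrow> 'n pmf"
    and Amax Smax :: nat
    and \<mu> \<nu> :: "'n \<Rightarrow> real"
    and \<sigma>2 :: real
    and \<pi> :: "real \<Rightarrow> ('n \<Rightarrow> nat) pmf"
  assumes S_bound: "\<forall>n. \<forall>s \<in> set_pmf (S n). s \<le> Smax"
    and S_mean: "\<forall>n. \<mu> n = measure_pmf.expectation (S n) real"
    and S_var: "\<forall>n. \<nu> n \<ge> 0 \<and> \<nu> n ^ 2 = measure_pmf.variance (S n) real"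
    and mu_pos: "(\<Sum>n\<in>UNIV. \<mu> n) > 0"
    and A_fam: "\<forall>eps. 0 < eps \<and> eps < (\<Sum>n\<in>UNIV. \<mu> n) \<longrightarrow>
                  (\<forall>a \<in> set_pmf (A eps). a \<le> Amax) \<and> pmf (A eps) 0 > 0 \<and>
                  measure_pmf.expectation (A eps) real = (\<Sum>n\<in>UNIV. \<mu> n) - eps"
    and A_var: "((\<lambda>eps. measure_pmf.variance (A eps) real) \<longlongrightarrow> \<sigma>2) (at_right 0)"
    and TO: "throughput_optimal A S r (\<Sum>n\<in>UNIV. \<mu> n)"
    and pi_stat: "\<forall>eps. 0 < eps \<and> eps < (\<Sum>n\<in>UNIV. \<mu> n) \<longrightarrow>
                  stationary (lb_kernel (A eps) S r) (\<pi> eps)"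
  shows "Limsup (at_right 0)
            (\<lambda>eps. ereal (eps * measure_pmf.expectation (\<pi> eps) (\<lambda>q. real (\<Sum>n\<in>UNIV. q n))))
          \<le> ereal ((\<sigma>2 + (\<Sum>n\<in>UNIV. \<nu> n ^ 2)) / 2)
     \<longleftrightarrow>
     ((\<lambda>eps. measure_pmf.expectation (bind_pmf (\<pi> eps) (lb_step (A eps) S r))
                (\<lambda>(u, q'). norm1 q' * norm1 u)) \<longlongrightarrow> 0) (at_right 0)"
proof -
  define MS where "MS = (\<Sum>n\<in>UNIV. \<mu> n)"
  define K where "K = real (CARD('n) * Smax)"
  define E where "E = (\<lambda>eps. eps * measure_pmf.expectation (\<pi> eps) (\<lambda>q. real (\<Sum>n\<in>UNIV. q n)))"
  define G where "G = (\<lambda>eps. measure_pmf.expectation (bind_pmf (\<pi> eps) (lb_step (A eps) S r))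
                (\<lambda>(u, q'). norm1 q' * norm1 u))"
  define V where "V = (\<lambda>eps. measure_pmf.expectation (bind_pmf (\<pi> eps) (lb_step (A eps) S r)) (\<lambda>x. (norm1 (fst x))^2))"
  define F where "F = (\<lambda>eps. (measure_pmf.variance (A eps) real + (\<Sum>n\<in>UNIV. \<nu> n ^ 2) + eps^2 - V eps) / 2)"
  define Z where "Z = (\<sigma>2 + (\<Sum>n\<in>UNIV. \<nu> n ^ 2)) / 2"
  have ev: "eventually (\<lambda>eps. E eps = F eps + G eps \<and> 0 \<le> V eps \<and> V eps \<le> K * eps \<and> 0 \<le> G eps) (at_right (0::real))"
    unfolding eventually_at_right_field
  proof (intro exI[of _ MS] conjI allI impI)
    show "0 < MS" using mu_pos unfolding MS_def .
    fix eps :: real assume h: "0 < eps" "eps < MS"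
    then have Af: "(\<forall>a \<in> set_pmf (A eps). a \<le> Amax) \<and> measure_pmf.expectation (A eps) real = MS - eps"
      using A_fam unfolding MS_def by auto
    have st: "stationary (lb_kernel (A eps) S r) (\<pi> eps)" using pi_stat h unfolding MS_def by auto
    have ints: "\<forall>k::nat. integrable (measure_pmf (\<pi> eps)) (\<lambda>q. norm1 q ^ k)"
      using TO st h unfolding throughput_optimal_def MS_def by blast
    have Svar': "\<forall>n. \<nu> n ^ 2 = measure_pmf.variance (S n) real" using S_var by blast
    note I = eps_identity[OF S_bound S_mean Svar' conjunct1[OF Af] conjunct2[OF Af, unfolded MS_def] st ints]
    show "E eps = F eps + G eps" "0 \<le> V eps" "V eps \<le> K * eps" "0 \<le> G eps"
      using I unfolding E_def F_def G_def V_def K_def by simp_all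
  qed
  have Vlim: "(V \<longlongrightarrow> 0) (at_right 0)"
  proof (rule tendsto_sandwich[where f="\<lambda>_. 0" and h="\<lambda>eps. K * eps"])
    show "eventually (\<lambda>n. 0 \<le> V n) (at_right 0)" using ev by (rule eventually_mono) auto
    show "eventually (\<lambda>n. V n \<le> K * n) (at_right 0)" using ev by (rule eventually_mono) auto
    have "((\<lambda>eps. K * eps) \<longlongrightarrow> K * 0) (at_right (0::real))"
      by (intro tendsto_intros)
    then show "((\<lambda>eps. K * eps) \<longlongrightarrow> 0) (at_right (0::real))" by simp
  qed simp
  have Flim: "(F \<longlongrightarrow> Z) (at_right 0)"
  proof -
    have "(F \<longlongrightarrow> (\<sigma>2 + (\<Sum>n\<in>UNIV. \<nu> n ^ 2) + 0^2 - 0) / 2) (at_right 0)"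
      unfolding F_def by (intro tendsto_intros A_var Vlim) auto
    then show ?thesis unfolding Z_def by simp
  qed
  have ntriv: "\<not> trivial_limit (at_right (0::real))" by simp
  have main: "Limsup (at_right 0) (\<lambda>eps. ereal (E eps)) \<le> ereal Z \<longleftrightarrow> (G \<longlongrightarrow> 0) (at_right 0)"
  proof
    assume L: "Limsup (at_right 0) (\<lambda>eps. ereal (E eps)) \<le> ereal Z"
    show "(G \<longlongrightarrow> 0) (at_right 0)"
    proof (rule tendstoI)
      fix e :: real assume e: "0 < e"
      have "Limsup (at_right 0) (\<lambda>eps. ereal (E eps)) < ereal (Z + e/2)"
      proof -
        have "ereal Z < ereal (Z + e/2)" using e by simp
        then show ?thesis using L by (rule le_less_trans[rotated])
      qed
      then have e1: "eventually (\<lambda>eps. ereal (E eps) < ereal (Z + e/2)) (at_right 0)" by (rule Limsup_lessD)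
      have e2: "eventually (\<lambda>eps. Z - e/2 < F eps) (at_right 0)"
        using order_tendstoD(1)[OF Flim, of "Z - e/2"] e by simp
      show "eventually (\<lambda>eps. dist (G eps) 0 < e) (at_right 0)"
        using e1 e2 ev by eventually_elim auto
    qed
  next
    assume Gl: "(G \<longlongrightarrow> 0) (at_right 0)"
    have "((\<lambda>eps. F eps + G eps) \<longlongrightarrow> Z + 0) (at_right 0)" by (intro tendsto_intros Flim Gl)
    then have FG: "((\<lambda>eps. F eps + G eps) \<longlongrightarrow> Z) (at_right 0)" by simp
    have ev2: "eventually (\<lambda>eps. E eps = F eps + G eps) (at_right 0)" using ev by (rule eventually_mono) auto
    have "(E \<longlongrightarrow> Z) (at_right 0)" using tendsto_cong[OF ev2] FG by simp
    then have "((\<lambda>eps. ereal (E eps)) \<longlongrightarrow> ereal Z) (at_right 0)" by (rule tendsto_ereal)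
    then have "Limsup (at_right 0) (\<lambda>eps. ereal (E eps)) = ereal Z" by (rule lim_imp_Limsup[OF ntriv])
    then show "Limsup (at_right 0) (\<lambda>eps. ereal (E eps)) \<le> ereal Z" by simp
  qed
  then show ?thesis unfolding E_def G_def Z_def .
qed

end
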